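(* There is an absolute constant $C > 0$ such that for every integer $L \geq 2$, every $m \geq 1$, every $\lambda \in [m]^{L+1}$ and all integers $0 \leq i < j \leq L$, every state on the path produced by running $\mathbf{Swap}(i, j)$ from $\lambda$ differs from $\lambda$ in at most $C \log L$ coordinates.
   Context: States are vectors $\lambda = (\lambda_0, \ldots, \lambda_L) \in [m]^{L+1}$, $[m] = \{1,\ldots,m\}$; coordinate $\ell$ is called level $\ell$. The recursive procedure $\mathbf{Swap}(i, j)$ for integers $0 \leq i \leq j \leq L$ acts on the current state as follows: if $j - i \leq 1$, it performs the single elementary operation "exchange the entries at levels $i$ and $j$"; otherwise, with $h = \lfloor (i + j)/2 \rfloor$, it performs $\mathbf{Swap}(i, h)$, then $\mathbf{Swap}(h, j)$, then $\mathbf{Swap}(i, h)$. The path produced from a starting state is the sequence consisting of the starting state followed by the state obtained after each elementary operation. Two states differ in a coordinate $\ell$ if their level-$\ell$ entries are unequal. *)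

theory Defs
  imports Complex_Main
begin

text \<open>States are lists of length L+1; entry l is level l.\<close>

text \<open>The sequence of elementary operations (pairs of levels to exchange) performed by Swap(i,j).\<close>
function swap_ops :: "nat \<Rightarrow> nat \<Rightarrow> (nat \<times> nat) list" where
  "swap_ops i j =
     (if j - i \<le> 1 then [(i, j)]
      else (let h = (i + j) div 2 in swap_ops i h @ swap_ops h j @ swap_ops i h))"
  by pat_completeness auto
termination
  by (relation "measure (\<lambda>(i, j). j - i)") auto

definition exch :: "nat \<times> nat \<Rightarrow> 'a list \<Rightarrow> 'a list" where
  "exch p s = (case p of (a, b) \<Rightarrow> s[a := s ! b, b := s ! a])"

fun run_path :: "'a list \<Rightarrow> (nat \<times> nat) list \<Rightarrow> 'a list list" where
  "run_path s [] = [s]"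
| "run_path s (p # ps) = s # run_path (exch p s) ps"

definition swap_path :: "'a list \<Rightarrow> nat \<Rightarrow> nat \<Rightarrow> 'a list list" where
  "swap_path s i j = run_path s (swap_ops i j)"

definition num_diff :: "nat \<Rightarrow> 'a list \<Rightarrow> 'a list \<Rightarrow> nat" where
  "num_diff L s t = card {l. l \<le> L \<and> s ! l \<noteq> t ! l}"

end

theory Submission
  imports Defs
begin

declare swap_ops.simps[simp del]

definition dd :: "'a list \<Rightarrow> 'a list \<Rightarrow> nat set" where
  "dd t s = {l. l < length s \<and> t ! l \<noteq> s ! l}"

lemma len_exch[simp]: "length (exch p s) = length s"
  by (cases p) (simp add: exch_def)

lemma len_fold[simp]: "length (fold exch ps s) = length s"
  by (induction ps arbitrary: s) auto

lemma len_path: "t \<in> set (run_path s ps) \<Longrightarrow> length t = length s"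
  by (induction s ps rule: run_path.induct) auto

lemma self_path: "s \<in> set (run_path s ps)"
  by (cases ps) auto

lemma path_app:
  "set (run_path s (xs @ ys)) = set (run_path s xs) \<union> set (run_path (fold exch xs s) ys)"
  by (induction xs arbitrary: s) (auto simp: self_path)

lemma fin_dd[simp]: "finite (dd t s)"
  unfolding dd_def by simp

lemma dd_tri: "length u = length s \<Longrightarrow> card (dd t s) \<le> card (dd t u) + card (dd u s)"
proof -
  assume "length u = length s"
  then have "dd t s \<subseteq> dd t u \<union> dd u s" unfolding dd_def by auto
  then have "card (dd t s) \<le> card (dd t u \<union> dd u s)" by (intro card_mono) auto
  also have "\<dots> \<le> card (dd t u) + card (dd u s)" by (rule card_Un_le)
  finally show ?thesis .
qed

lemma card3: "card {a, b, c::nat} \<le> 3"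
  by (simp add: card_insert_if)

lemma card2: "card {a, b::nat} \<le> 2"
  by (simp add: card_insert_if)

lemma exch_nth: "l \<noteq> a \<Longrightarrow> l \<noteq> b \<Longrightarrow> exch (a, b) s ! l = s ! l"
  by (simp add: exch_def)

lemma dd_exch: "card (dd (exch (a, b) s) s) \<le> 2"
proof -
  have "dd (exch (a, b) s) s \<subseteq> {a, b}" unfolding dd_def using exch_nth by blast
  then have "card (dd (exch (a, b) s) s) \<le> card {a, b}" by (intro card_mono) auto
  then show ?thesis using card2[of a b] by linarith
qed

lemma dd_exch2: "card (dd (exch (h, j) (exch (i, h) s)) s) \<le> 3"
proof -
  have "dd (exch (h, j) (exch (i, h) s)) s \<subseteq> {i, h, j}" unfolding dd_def using exch_nth by (smt (verit) insertCI mem_Collect_eq subsetI)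
  then have "card (dd (exch (h, j) (exch (i, h) s)) s) \<le> card {i, h, j}" by (intro card_mono) auto
  then show ?thesis using card3[of i h j] by linarith
qed

lemma net: "i \<le> j \<Longrightarrow> j < length s \<Longrightarrow> fold exch (swap_ops i j) s = exch (i, j) s"
proof (induction i j arbitrary: s rule: swap_ops.induct)
  case (1 i j)
  show ?case
  proof (cases "j - i \<le> 1")
    case True
    then show ?thesis by (subst swap_ops.simps) simp
  next
    case False
    define h where "h = (i + j) div 2"
    have hi: "i < h" "h < j" using False "1.prems" unfolding h_def by auto
    have e: "swap_ops i j = swap_ops i h @ swap_ops h j @ swap_ops i h"
      using False by (subst swap_ops.simps) (simp add: h_def Let_def)
    have IH1: "\<And>s::'a list. h < length s \<Longrightarrow> fold exch (swap_ops i h) s = exch (i, h) s"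
      using "1.IH"(1)[OF False h_def] hi by auto
    have IH2: "\<And>s::'a list. j < length s \<Longrightarrow> fold exch (swap_ops h j) s = exch (h, j) s"
      using "1.IH"(2)[OF False h_def] hi by auto
    have "fold exch (swap_ops i j) s = exch (i, h) (exch (h, j) (exch (i, h) s))"
      using e IH1 IH2 hi "1.prems" by simp
    also have "\<dots> = exch (i, j) s"
      using hi "1.prems" by (auto simp: exch_def list_eq_iff_nth_eq nth_list_update)
    finally show ?thesis .
  qed
qed

lemma main: "j - i \<le> 2 ^ k \<Longrightarrow> i \<le> j \<Longrightarrow> j < length s \<Longrightarrow>
  t \<in> set (run_path s (swap_ops i j)) \<Longrightarrow> card (dd t s) \<le> 3 * k + 2"
proof (induction k arbitrary: i j s t)
  case 0
  then have "swap_ops i j = [(i, j)]" by (subst swap_ops.simps) simp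
  then have "t = s \<or> t = exch (i, j) s" using "0.prems" by auto
  then show ?case using dd_exch[of i j s] by (auto simp: dd_def)
next
  case (Suc k)
  show ?case
  proof (cases "j - i \<le> 1")
    case True
    then have "swap_ops i j = [(i, j)]" by (subst swap_ops.simps) simp
    then have "t = s \<or> t = exch (i, j) s" using Suc.prems by auto
    then show ?thesis using dd_exch[of i j s] by (auto simp: dd_def)
  next
    case False
    define h where "h = (i + j) div 2"
    have hi: "i < h" "h < j" "h - i \<le> 2 ^ k" "j - h \<le> 2 ^ k"
      using False Suc.prems unfolding h_def by auto
    have e: "swap_ops i j = swap_ops i h @ swap_ops h j @ swap_ops i h"
      using False by (subst swap_ops.simps) (simp add: h_def Let_def)
    define s1 where "s1 = exch (i, h) s"
    define s2 where "s2 = exch (h, j) s1"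
    have f1: "fold exch (swap_ops i h) s = s1" using net[of i h s] hi Suc.prems s1_def by auto
    have f2: "fold exch (swap_ops h j) s1 = s2" using net[of h j s1] hi Suc.prems s1_def s2_def by auto
    have "t \<in> set (run_path s (swap_ops i h)) \<or> t \<in> set (run_path s1 (swap_ops h j))
       \<or> t \<in> set (run_path s2 (swap_ops i h))"
      using Suc.prems(4) unfolding e path_app f1 fold_append f2 by (auto simp: f1)
    moreover
    { assume "t \<in> set (run_path s (swap_ops i h))"
      then have "card (dd t s) \<le> 3 * k + 2" using Suc.IH[of h i s t] hi Suc.prems by auto }
    moreover
    { assume a: "t \<in> set (run_path s1 (swap_ops h j))"
      have "card (dd t s1) \<le> 3 * k + 2" using Suc.IH[OF _ _ _ a] hi Suc.prems s1_def by auto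
      moreover have "card (dd s1 s) \<le> 2" using dd_exch s1_def by simp
      ultimately have "card (dd t s) \<le> 3 * k + 4" using dd_tri[of s1 s t] s1_def by simp }
    moreover
    { assume a: "t \<in> set (run_path s2 (swap_ops i h))"
      have "card (dd t s2) \<le> 3 * k + 2" using Suc.IH[OF _ _ _ a] hi Suc.prems s1_def s2_def by auto
      moreover have "card (dd s2 s) \<le> 3" using dd_exch2 s1_def s2_def by simp
      ultimately have "card (dd t s) \<le> 3 * k + 5" using dd_tri[of s2 s t] s1_def s2_def by simp }
    ultimately show ?thesis by auto
  qed
qed

theorem lemma2:
  shows "\<exists>C::real. C > 0 \<and>
    (\<forall>L::nat. \<forall>m::nat. \<forall>lam::nat list. \<forall>i j::nat.
       L \<ge> 2 \<longrightarrow> m \<ge> 1 \<longrightarrow> length lam = L + 1 \<longrightarrow> set lam \<subseteq> {1..m} \<longrightarrow>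
       i < j \<longrightarrow> j \<le> L \<longrightarrow>
       (\<forall>s \<in> set (swap_path lam i j). real (num_diff L s lam) \<le> C * ln (real L)))"
proof (intro exI[of _ "10 / ln 2"] conjI allI impI ballI)
  show "(0::real) < 10 / ln 2" by simp
next
  fix L m :: nat and lam :: "nat list" and i j :: nat and s
  assume L: "2 \<le> L" and len: "length lam = L + 1" and ij: "i < j" "j \<le> L"
    and s: "s \<in> set (swap_path lam i j)"
  define k where "k = (LEAST k. L \<le> 2 ^ k)"
  have ex: "L \<le> 2 ^ L" using less_exp[of L] by simp
  have k1: "L \<le> 2 ^ k" unfolding k_def by (rule LeastI[of _ L]) (rule ex)
  have kpos: "k \<ge> 1"
  proof (rule ccontr)
    assume "\<not> k \<ge> 1" then have "k = 0" by simp
    then show False using k1 L by simp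
  qed
  have k2: "\<not> L \<le> 2 ^ (k - 1)" unfolding k_def
    by (rule not_less_Least) (use kpos k_def in simp)
  have c: "card (dd s lam) \<le> 3 * k + 2"
    using main[of j i k lam s] s ij len k1 unfolding swap_path_def by auto
  have nd: "num_diff L s lam = card (dd s lam)"
    unfolding num_diff_def dd_def using len by (metis less_Suc_eq_le Suc_eq_plus1)
  have r1: "real (2 ^ (k - 1)) < real L" using k2 by simp
  then have "ln (real (2 ^ (k - 1))) < ln (real L)" by (intro ln_strict_mono) auto
  then have r2: "real (k - 1) * ln 2 < ln (real L)" by (simp add: ln_realpow)
  have r3: "ln 2 \<le> ln (real L)" using L by simp
  have "real k * ln 2 \<le> 2 * ln (real L)"
    using r2 r3 kpos by (simp add: of_nat_diff algebra_simps)
  then have "real k \<le> 2 * ln (real L) / ln 2" by (simp add: field_simps)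
  then have "5 * real k \<le> 10 / ln 2 * ln (real L)" by (simp add: field_simps)
  moreover have "real (num_diff L s lam) \<le> 5 * real k" using c nd kpos by simp
  ultimately show "real (num_diff L s lam) \<le> 10 / ln 2 * ln (real L)" by linarith
qed

end
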